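(* Let $\bm{N}=(N_0,\ldots,N_{n-1},-\sum_iN_i)$ and $\bm{M}=(M_0,\ldots,M_{n-1},-\sum_iM_i)$ with all $N_i,M_i\in\mathbb{Z}_{\ge0}$, and suppose $\sum_{i=0}^kN_i\ge\sum_{i=0}^kM_i$ for every $k=0,\ldots,n-1$. Then $K_n(\bm{N})\ge K_n(\bm{M})$.
   Context: $K_n(\bm{N})$ is the number of integer vectors $(f_{ij})_{0\le i<j\le n}\in\mathbb{Z}_{\ge0}^{\binom{n+1}{2}}$ with $\sum_{j>i} f_{ij}-\sum_{k<i} f_{ki}=N_i$ for every $i\in\{0,\ldots,n\}$. *)

theory Defs
  imports Main
begin

text \<open>Flows: integer vectors (f i j) indexed by 0 <= i < j <= n with nonnegative
entries; represented as functions nat => nat => nat that vanish outside the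
index set, so that the set of such vectors is in bijection with
Z_{>=0}^{binom(n+1,2)}.\<close>

definition flow_set :: "nat \<Rightarrow> (nat \<Rightarrow> int) \<Rightarrow> (nat \<Rightarrow> nat \<Rightarrow> nat) set" where
  "flow_set n N = {f. (\<forall>i j. \<not> (i < j \<and> j \<le> n) \<longrightarrow> f i j = 0) \<and>
      (\<forall>i \<in> {0..n}. (\<Sum>j\<in>{i<..n}. int (f i j)) - (\<Sum>k<i. int (f k i)) = N i)}"

definition K :: "nat \<Rightarrow> (nat \<Rightarrow> int) \<Rightarrow> nat" where
  "K n N = card (flow_set n N)"

definition netflow :: "nat \<Rightarrow> (nat \<Rightarrow> nat) \<Rightarrow> nat \<Rightarrow> int" where
  "netflow n N i = (if i < n then int (N i) else - (\<Sum>k<n. int (N k)))"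

end

theory Submission
  imports Defs "HOL-Library.FuncSet"
begin

lemma flow_bound:
  assumes f: "f \<in> flow_set n v" and ab: "a < b" "b \<le> n"
  shows "int (f a b) \<le> - (\<Sum>i\<le>n. int i * v i)"
proof -
  define F where "F = (\<lambda>i j. int (f i j))"
  have z: "\<And>i j. \<not> (i < j \<and> j \<le> n) \<Longrightarrow> F i j = 0"
    using f unfolding flow_set_def F_def by auto
  have eq: "\<And>i. i \<le> n \<Longrightarrow> (\<Sum>j\<in>{i<..n}. F i j) - (\<Sum>k<i. F k i) = v i"
    using f unfolding flow_set_def F_def by auto
  have out: "(\<Sum>j\<in>{i<..n}. F i j) = (\<Sum>j\<le>n. F i j)" for i
    by (rule sum.mono_neutral_left) (auto intro: z)
  have inn: "(\<Sum>k<i. F k i) = (\<Sum>k\<le>n. F k i)" if "i \<le> n" for i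
    using that by (intro sum.mono_neutral_left) (auto intro: z)
  have v: "v i = (\<Sum>j\<le>n. F i j) - (\<Sum>k\<le>n. F k i)" if "i \<le> n" for i
    using eq[OF that] out inn[OF that] by simp
  have "(\<Sum>i\<le>n. int i * v i) = (\<Sum>i\<le>n. int i * ((\<Sum>j\<le>n. F i j) - (\<Sum>k\<le>n. F k i)))"
    by (rule sum.cong) (auto simp: v)
  also have "\<dots> = (\<Sum>i\<le>n. \<Sum>j\<le>n. int i * F i j) - (\<Sum>i\<le>n. \<Sum>k\<le>n. int i * F k i)"
    by (simp add: right_diff_distrib sum_distrib_left sum_subtractf)
  also have "(\<Sum>i\<le>n. \<Sum>k\<le>n. int i * F k i) = (\<Sum>k\<le>n. \<Sum>i\<le>n. int i * F k i)"
    by (rule sum.swap)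
  finally have tot: "- (\<Sum>i\<le>n. int i * v i) = (\<Sum>i\<le>n. \<Sum>j\<le>n. (int j - int i) * F i j)"
    by (simp add: left_diff_distrib sum_subtractf)
  have nn: "\<And>i j. 0 \<le> (int j - int i) * F i j"
  proof -
    fix i j
    show "0 \<le> (int j - int i) * F i j"
    proof (cases "i < j \<and> j \<le> n")
      case True thus ?thesis by (simp add: F_def)
    next
      case False thus ?thesis using z[OF False] by simp
    qed
  qed
  have "F a b = 1 * F a b" by simp
  also have "\<dots> \<le> (int b - int a) * F a b"
    by (rule mult_right_mono) (use ab in \<open>auto simp: F_def\<close>)
  also have "\<dots> \<le> (\<Sum>j\<le>n. (int j - int a) * F a j)"
    by (rule member_le_sum) (use ab nn in auto)
  also have "\<dots> \<le> (\<Sum>i\<le>n. \<Sum>j\<le>n. (int j - int i) * F i j)"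
    by (rule member_le_sum[where f="\<lambda>i. \<Sum>j\<le>n. (int j - int i) * F i j"])
       (use ab nn in \<open>auto intro: sum_nonneg\<close>)
  finally show ?thesis using tot by (simp add: F_def)
qed

lemma flow_finite: "finite (flow_set n v)"
proof -
  define C where "C = nat (- (\<Sum>i\<le>n. int i * v i))"
  define E where "E = (\<lambda>h i j. if i \<le> n \<and> j \<le> n then h (i,j) else (0::nat))"
  have "flow_set n v \<subseteq> E ` (PiE ({..n}\<times>{..n}) (\<lambda>_. {..C}))"
  proof
    fix f assume f: "f \<in> flow_set n v"
    have z: "\<And>i j. \<not> (i < j \<and> j \<le> n) \<Longrightarrow> f i j = 0"
      using f unfolding flow_set_def by auto
    have bd: "f i j \<le> C" for i j
    proof (cases "i < j \<and> j \<le> n")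
      case True
      then show ?thesis using flow_bound[OF f, of i j] unfolding C_def by linarith
    next
      case False then show ?thesis using z by simp
    qed
    have "f = E (restrict (\<lambda>p. f (fst p) (snd p)) ({..n}\<times>{..n}))"
      unfolding E_def using z by (auto simp: fun_eq_iff restrict_def)
    moreover have "restrict (\<lambda>p. f (fst p) (snd p)) ({..n}\<times>{..n}) \<in> PiE ({..n}\<times>{..n}) (\<lambda>_. {..C})"
      using bd by auto
    ultimately show "f \<in> E ` (PiE ({..n}\<times>{..n}) (\<lambda>_. {..C}))" by blast
  qed
  moreover have "finite (PiE ({..n}\<times>{..n}) (\<lambda>_. {..C}))"
    by (rule finite_PiE) auto
  ultimately show ?thesis by (meson finite_surj)
qed

theorem proposition2p8:
  fixes n :: nat and N M :: "nat \<Rightarrow> nat"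
  assumes "\<forall>k<n. (\<Sum>i\<le>k. M i) \<le> (\<Sum>i\<le>k. N i)"
  shows "K n (netflow n N) \<ge> K n (netflow n M)"
proof -
  define Q where "Q i = (\<Sum>t\<le>i. int (N t)) - (\<Sum>t\<le>i. int (M t))" for i
  have Qnn: "0 \<le> Q i" if "i < n" for i
  proof -
    have "(\<Sum>t\<le>i. M t) \<le> (\<Sum>t\<le>i. N t)" using assms that by blast
    hence "int (\<Sum>t\<le>i. M t) \<le> int (\<Sum>t\<le>i. N t)" by linarith
    thus ?thesis unfolding Q_def by (simp add: of_nat_sum)
  qed
  define g where "g i j = (if i < n then (if j = Suc i then nat (Q i) else 0) else 0)" for i j
  have gout: "(\<Sum>j\<in>{i<..n}. int (g i j)) = (if i < n then Q i else 0)" if "i \<le> n" for i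
  proof (cases "i < n")
    case True
    have "(\<Sum>j\<in>{i<..n}. int (g i j)) = (\<Sum>j\<in>{i<..n}. if j = Suc i then Q i else 0)"
      by (rule sum.cong) (use True Qnn in \<open>auto simp: g_def\<close>)
    also have "\<dots> = Q i" using True by (simp add: sum.delta')
    finally show ?thesis using True by simp
  next
    case False then show ?thesis by (simp add: g_def)
  qed
  have gin: "(\<Sum>k<i. int (g k i)) = (if 0 < i then Q (i - 1) else 0)" if "i \<le> n" for i
  proof (cases i)
    case 0 then show ?thesis by simp
  next
    case (Suc m)
    have "(\<Sum>k<i. int (g k i)) = int (g m i) + (\<Sum>k<m. int (g k i))"
      using Suc by simp
    also have "(\<Sum>k<m. int (g k i)) = 0" using Suc by (intro sum.neutral) (auto simp: g_def)
    finally show ?thesis using Suc that Qnn[of m] by (simp add: g_def)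
  qed
  define T where "T f = (\<lambda>i j. f i j + g i j)" for f :: "nat \<Rightarrow> nat \<Rightarrow> nat"
  have "inj_on T (flow_set n (netflow n M))"
    unfolding T_def by (rule inj_onI) (auto simp: fun_eq_iff)
  moreover have "T ` flow_set n (netflow n M) \<subseteq> flow_set n (netflow n N)"
  proof
    fix h assume "h \<in> T ` flow_set n (netflow n M)"
    then obtain f where f: "f \<in> flow_set n (netflow n M)" and h: "h = T f" by blast
    have z: "\<forall>i j. \<not> (i < j \<and> j \<le> n) \<longrightarrow> h i j = 0"
      using f unfolding flow_set_def h T_def g_def by auto
    have "(\<Sum>j\<in>{i<..n}. int (h i j)) - (\<Sum>k<i. int (h k i)) = netflow n N i" if i: "i \<le> n" for i
    proof -
      have fe: "(\<Sum>j\<in>{i<..n}. int (f i j)) - (\<Sum>k<i. int (f k i)) = netflow n M i"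
        using f i unfolding flow_set_def by auto
      have "(\<Sum>j\<in>{i<..n}. int (h i j)) - (\<Sum>k<i. int (h k i)) =
            netflow n M i + ((\<Sum>j\<in>{i<..n}. int (g i j)) - (\<Sum>k<i. int (g k i)))"
        using fe unfolding h T_def by (simp add: sum.distrib)
      also have "\<dots> = netflow n M i + (if i < n then Q i else 0) - (if 0 < i then Q (i - 1) else 0)"
        using gout[OF i] gin[OF i] by simp
      also have "\<dots> = netflow n N i"
      proof (cases "i < n")
        case True
        then show ?thesis
        proof (cases i)
          case 0 then show ?thesis using True by (simp add: netflow_def Q_def)
        next
          case (Suc m) then show ?thesis using True by (simp add: netflow_def Q_def)
        qed
      next
        case False
        then have "i = n" using i by simp
        then show ?thesis
        proof (cases n)
          case 0 then show ?thesis using \<open>i = n\<close> by (simp add: netflow_def)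
        next
          case (Suc m) then show ?thesis using \<open>i = n\<close>
            by (simp add: netflow_def Q_def lessThan_Suc_atMost)
        qed
      qed
      finally show ?thesis .
    qed
    then show "h \<in> flow_set n (netflow n N)" using z unfolding flow_set_def by auto
  qed
  ultimately show ?thesis unfolding K_def
    by (intro card_inj_on_le flow_finite)
qed

end
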